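(* Let $l^1 < l^2 < l^3$ and let $g : [l^1,l^3] \to \mathbb{R}$ be continuous (and defined at $0$), concave on $[l^1,l^2]$ and convex on $[l^2,l^3]$. Let $\alpha^1 = (g(l^2)-g(l^1))/(l^2-l^1)$. For $x \in [l^1,l^3]$ define the continuous relaxation of the Incremental Model $$g_{IM}(x) = \min\Big\{ g(l^1) + \alpha^1\phi^1 + \gamma^2 \;:\; \gamma^2 \ge [g(l^2 + \phi^2/\psi^2) - g(l^2)]\psi^2,\ x = l^1 + \phi^1 + \phi^2,\ (l^{s+1}-l^s)\psi^{s+1} \le \phi^s \le (l^{s+1}-l^s)\psi^s \ (s=1,2),\ \psi^1 = 1,\ \psi^3 = 0\Big\}$$ and the continuous relaxation of the Multiple Choice Model $$g_{MCM}(x) = \min\Big\{ g(0)y^2 + \alpha^1 x^1 + [g(l^1) - \alpha^1 l^1]y^1 + z^2 \;:\; x = x^1 + x^2,\ z^2 \ge [g(x^2/y^2) - g(0)]y^2,\ l^s y^s \le x^s \le l^{s+1}y^s\ (s=1,2),\ y^1 + y^2 = 1,\ y^1,y^2 \ge 0\Big\},$$ where a perspective term $[h(a/b)]b$ with $b=0$ (and hence $a=0$) is interpreted as $0$. Then $g_{IM}(x) = g_{MCM}(x)$ for every $x \in [l^1,l^3]$, i.e. the continuous relaxations of the Incremental Model and the Multiple Choice Model are equivalent.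
   Context: These are the two piecewise-convex formulations (with perspective reformulation on the convex interval and the secant on the concave interval) of a univariate function whose domain splits into a concave interval followed by a convex interval; the binary activation variables ($\psi^2$ in the Incremental Model, $y^1,y^2$ in the Multiple Choice Model) are relaxed to be continuous. *)

theory Defs
  imports "HOL-Analysis.Analysis"
begin

definition persp :: "(real \<Rightarrow> real) \<Rightarrow> real \<Rightarrow> real \<Rightarrow> real" where
  "persp h a b = (if b = 0 then 0 else h (a / b) * b)"

definition alpha1 :: "(real \<Rightarrow> real) \<Rightarrow> real \<Rightarrow> real \<Rightarrow> real" where
  "alpha1 g l1 l2 = (g l2 - g l1) / (l2 - l1)"

text \<open>Continuous relaxation of the Incremental Model (psi^1 = 1, psi^3 = 0 substituted).\<close>
definition g_IM :: "(real \<Rightarrow> real) \<Rightarrow> real \<Rightarrow> real \<Rightarrow> real \<Rightarrow> real \<Rightarrow> real" where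
  "g_IM g l1 l2 l3 x = Inf {g l1 + alpha1 g l1 l2 * \<phi>1 + \<gamma>2 | \<phi>1 \<phi>2 \<psi>2 \<gamma>2.
      \<gamma>2 \<ge> persp (\<lambda>t. g (l2 + t) - g l2) \<phi>2 \<psi>2 \<and>
      x = l1 + \<phi>1 + \<phi>2 \<and>
      (l2 - l1) * \<psi>2 \<le> \<phi>1 \<and> \<phi>1 \<le> (l2 - l1) * 1 \<and>
      (l3 - l2) * 0 \<le> \<phi>2 \<and> \<phi>2 \<le> (l3 - l2) * \<psi>2}"

definition g_MCM :: "(real \<Rightarrow> real) \<Rightarrow> real \<Rightarrow> real \<Rightarrow> real \<Rightarrow> real \<Rightarrow> real" where
  "g_MCM g l1 l2 l3 x = Inf {g 0 * y2 + alpha1 g l1 l2 * x1 + (g l1 - alpha1 g l1 l2 * l1) * y1 + z2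
      | x1 x2 y1 y2 z2.
      x = x1 + x2 \<and>
      z2 \<ge> persp (\<lambda>t. g t - g 0) x2 y2 \<and>
      l1 * y1 \<le> x1 \<and> x1 \<le> l2 * y1 \<and>
      l2 * y2 \<le> x2 \<and> x2 \<le> l3 * y2 \<and>
      y1 + y2 = 1 \<and> y1 \<ge> 0 \<and> y2 \<ge> 0}"

end

theory Submission
  imports Defs
begin

theorem proposition1:
  fixes g :: "real \<Rightarrow> real" and l1 l2 l3 x :: real
  assumes "l1 < l2" and "l2 < l3"
    and "continuous_on {l1..l3} g"
    and "concave_on {l1..l2} g"
    and "convex_on {l2..l3} g"
    and "x \<in> {l1..l3}"
  shows "g_IM g l1 l2 l3 x = g_MCM g l1 l2 l3 x"
proof -
  define a where "a = alpha1 g l1 l2"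
  have ha: "a * (l2 - l1) = g l2 - g l1"
    using assms(1) unfolding a_def alpha1_def by (simp add: field_simps)
  have "{g l1 + a * \<phi>1 + \<gamma>2 | \<phi>1 \<phi>2 \<psi>2 \<gamma>2.
      \<gamma>2 \<ge> persp (\<lambda>t. g (l2 + t) - g l2) \<phi>2 \<psi>2 \<and>
      x = l1 + \<phi>1 + \<phi>2 \<and>
      (l2 - l1) * \<psi>2 \<le> \<phi>1 \<and> \<phi>1 \<le> (l2 - l1) * 1 \<and>
      (l3 - l2) * 0 \<le> \<phi>2 \<and> \<phi>2 \<le> (l3 - l2) * \<psi>2}
    = {g 0 * y2 + a * x1 + (g l1 - a * l1) * y1 + z2
      | x1 x2 y1 y2 z2.
      x = x1 + x2 \<and>
      z2 \<ge> persp (\<lambda>t. g t - g 0) x2 y2 \<and>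
      l1 * y1 \<le> x1 \<and> x1 \<le> l2 * y1 \<and>
      l2 * y2 \<le> x2 \<and> x2 \<le> l3 * y2 \<and>
      y1 + y2 = 1 \<and> y1 \<ge> 0 \<and> y2 \<ge> 0}" (is "?A = ?B")
  proof
    show "?A \<subseteq> ?B"
    proof
      fix v assume "v \<in> ?A"
      then obtain \<phi>1 \<phi>2 \<psi>2 \<gamma>2 where v: "v = g l1 + a * \<phi>1 + \<gamma>2"
        and c1: "\<gamma>2 \<ge> persp (\<lambda>t. g (l2 + t) - g l2) \<phi>2 \<psi>2"
        and c2: "x = l1 + \<phi>1 + \<phi>2"
        and c3: "(l2 - l1) * \<psi>2 \<le> \<phi>1" "\<phi>1 \<le> (l2 - l1) * 1"
        and c4: "(l3 - l2) * 0 \<le> \<phi>2" "\<phi>2 \<le> (l3 - l2) * \<psi>2" by blast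
      have "0 \<le> (l3 - l2) * \<psi>2" using c4 by linarith
      then have p0: "\<psi>2 \<ge> 0"
        using assms(2) by (simp add: zero_le_mult_iff)
      have "(l2 - l1) * \<psi>2 \<le> (l2 - l1) * 1" using c3 by linarith
      then have p1: "\<psi>2 \<le> 1"
        using assms(1) by (simp add: mult_le_cancel_left)
      define z2 where "z2 = \<gamma>2 + \<psi>2 * (g l2 - g 0)"
      have zc: "z2 \<ge> persp (\<lambda>t. g t - g 0) (l2 * \<psi>2 + \<phi>2) \<psi>2"
      proof (cases "\<psi>2 = 0")
        case True
        then show ?thesis using c1 unfolding z2_def persp_def by simp
      next
        case False
        have "(l2 * \<psi>2 + \<phi>2) / \<psi>2 = l2 + \<phi>2 / \<psi>2" using False by (simp add: field_simps)
        then show ?thesis using c1 False unfolding z2_def persp_def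
          by (simp add: algebra_simps)
      qed
      have e: "g 0 * \<psi>2 + a * (l1 + \<phi>1 - l2 * \<psi>2) + (g l1 - a * l1) * (1 - \<psi>2) + z2
          = g l1 + a * \<phi>1 + \<gamma>2 + \<psi>2 * ((g l2 - g l1) - a * (l2 - l1))"
        unfolding z2_def by (simp add: algebra_simps)
      have "v = g 0 * \<psi>2 + a * (l1 + \<phi>1 - l2 * \<psi>2) + (g l1 - a * l1) * (1 - \<psi>2) + z2"
        unfolding e v using ha by simp
      moreover have "x = (l1 + \<phi>1 - l2 * \<psi>2) + (l2 * \<psi>2 + \<phi>2)" using c2 by simp
      moreover have "l1 * (1 - \<psi>2) \<le> l1 + \<phi>1 - l2 * \<psi>2" using c3 by (simp add: algebra_simps)
      moreover have "l1 + \<phi>1 - l2 * \<psi>2 \<le> l2 * (1 - \<psi>2)" using c3 by (simp add: algebra_simps)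
      moreover have "l2 * \<psi>2 \<le> l2 * \<psi>2 + \<phi>2" using c4 by simp
      moreover have "l2 * \<psi>2 + \<phi>2 \<le> l3 * \<psi>2" using c4 by (simp add: algebra_simps)
      ultimately show "v \<in> ?B" using zc p0 p1
        by (intro CollectI exI[of _ "l1 + \<phi>1 - l2 * \<psi>2"] exI[of _ "l2 * \<psi>2 + \<phi>2"]
             exI[of _ "1 - \<psi>2"] exI[of _ \<psi>2] exI[of _ z2]) simp
    qed
  next
    show "?B \<subseteq> ?A"
    proof
      fix v assume "v \<in> ?B"
      then obtain x1 x2 y1 y2 z2 where v: "v = g 0 * y2 + a * x1 + (g l1 - a * l1) * y1 + z2"
        and c: "x = x1 + x2" "z2 \<ge> persp (\<lambda>t. g t - g 0) x2 y2"
          "l1 * y1 \<le> x1" "x1 \<le> l2 * y1" "l2 * y2 \<le> x2" "x2 \<le> l3 * y2"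
          "y1 + y2 = 1" "y1 \<ge> 0" "y2 \<ge> 0" by blast
      have y1: "y1 = 1 - y2" using c by simp
      define \<gamma>2 where "\<gamma>2 = z2 - y2 * (g l2 - g 0)"
      have gc: "\<gamma>2 \<ge> persp (\<lambda>t. g (l2 + t) - g l2) (x2 - l2 * y2) y2"
      proof (cases "y2 = 0")
        case True
        then show ?thesis using c unfolding \<gamma>2_def persp_def by simp
      next
        case False
        have "l2 + (x2 - l2 * y2) / y2 = x2 / y2" using False by (simp add: field_simps)
        then show ?thesis using c(2) False unfolding \<gamma>2_def persp_def
          by (simp add: algebra_simps)
      qed
      have e: "g l1 + a * (x1 - l1 + l2 * y2) + \<gamma>2
          = g 0 * y2 + a * x1 + (g l1 - a * l1) * (1 - y2) + z2 + y2 * (a * (l2 - l1) - (g l2 - g l1))"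
        unfolding \<gamma>2_def by (simp add: algebra_simps)
      have "v = g l1 + a * (x1 - l1 + l2 * y2) + \<gamma>2"
        unfolding e v y1 using ha by simp
      moreover have "x = l1 + (x1 - l1 + l2 * y2) + (x2 - l2 * y2)" using c by simp
      moreover have "(l2 - l1) * y2 \<le> x1 - l1 + l2 * y2" using c(3) y1 by (simp add: algebra_simps)
      moreover have "x1 - l1 + l2 * y2 \<le> (l2 - l1) * 1" using c(4) y1 by (simp add: algebra_simps)
      moreover have "(l3 - l2) * 0 \<le> x2 - l2 * y2" using c by simp
      moreover have "x2 - l2 * y2 \<le> (l3 - l2) * y2" using c by (simp add: algebra_simps)
      ultimately show "v \<in> ?A" using gc
        by (intro CollectI exI[of _ "x1 - l1 + l2 * y2"] exI[of _ "x2 - l2 * y2"]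
             exI[of _ y2] exI[of _ \<gamma>2]) simp
    qed
  qed
  then show ?thesis unfolding g_IM_def g_MCM_def a_def by simp
qed

end
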